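(* Let $\widehat{V}_2(\mathbf{A};\mathbf{Y}) = \frac{\hat\sigma^2}{n}\Big[1+\frac1n\sum_{i=1}^n\sum_{j=1}^n\mathbf{A}_{ij}\Big]$, let $\mathbf{A}^m\in\mathcal{A}(\mathbf{Y})$ maximize $\mathbf{A}\mapsto\widehat{V}_2(\mathbf{A};\mathbf{Y})$ over $\mathcal{A}(\mathbf{Y})$, and let $\widehat{V}_2'(\mathbf{Y})=\frac{\hat\sigma^2}{n}\big[1+\frac1n\sum_{i=1}^n \min\{d_i,n-1\}\big]$. Under the asymptotic scaling assumption and the homoskedasticity assumption $\mathrm{var}(X_i)=\mathrm{var}(X_j)$ for all $i,j\in\mathcal{V}$, for every $\epsilon>0$, \[\lim_{n\to\infty}\Pr\big(n\,\mathrm{var}(\overline{X}) - n\widehat{V}_2(\mathbf{A}^m;\mathbf{Y})>\epsilon\big)=0\quad\text{and}\quad \lim_{n\to\infty}\Pr\big(n\,\mathrm{var}(\overline{X}) - n\widehat{V}_2'(\mathbf{Y})>\epsilon\big)=0.\]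
   Context: Setting: $\mathcal{G}=(\mathcal{V},\mathcal{E})$ is a simple undirected graph with a real random variable $X_i$ attached to each vertex $i$. $\mathcal{G}$ is a dependency graph: for all disjoint $\mathcal{V}_1,\mathcal{V}_2\subset\mathcal{V}$ such that no edge of $\mathcal{E}$ joins a vertex of $\mathcal{V}_1$ to a vertex of $\mathcal{V}_2$, $\{X_i:i\in\mathcal{V}_1\}$ is independent of $\{X_j:j\in\mathcal{V}_2\}$. A subset $\mathcal{V}_S\subseteq\mathcal{V}$ with $|\mathcal{V}_S|=n$ is observed, labeled $1,\dots,n$. $\mathcal{G}_S=(\mathcal{V}_S,\mathcal{E}_S)$ is the induced subgraph on $\mathcal{V}_S$, with $n\times n$ adjacency matrix $\mathbf{A}^\circ$. $\mathcal{G}_R=(\mathcal{V}_S,\mathcal{E}_R)$ is a subgraph with $\mathcal{E}_R\subseteq\mathcal{E}_S$; $d_i$ is the degree of $i\in\mathcal{V}_S$ in $\mathcal{G}$; $\mathbf{Y}=((X_1,\dots,X_n),(d_1,\dots,d_n),\mathcal{G}_R)$. Let $\mu=\frac1n\sum_{i=1}^n \mathrm{E}[X_i]$, $\overline{X}=\frac1n\sum_i X_i$, $\hat\sigma^2=\frac1n\sum_i(X_i-\overline{X})^2$. A binary symmetric $n\times n$ matrix $\mathbf{A}$ with zero diagonal is compatible with $\mathbf{Y}$ if $\mathbf{A}_{ij}=\mathbf{A}_{ji}=1$ for every $\{i,j\}\in\mathcal{E}_R$ and $\sum_j\mathbf{A}_{ij}\le d_i$ for every $i$; $\mathcal{A}(\mathbf{Y})$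 is the set of compatible matrices. Asymptotic scaling assumption: a sequence, indexed by $n\to\infty$, of such settings (nested graphs with $|\mathcal{V}|=N_n\ge n$, $|\mathcal{V}_S|=n$), with finite positive constants $c_1,c_2,c_3$ independent of $n$ such that: $\Pr(|X_i-\mu|>c_1)=0$ for all $i\in\mathcal{V}_S$; $\sum_{j}\mathbf{A}^\circ_{ij}\le c_2$ for all $i\in\mathcal{V}_S$; and $\lim_{n\to\infty} n\,\mathrm{var}(\overline{X})=c_3$. *)

theory Defs
  imports "HOL-Probability.Probability"
begin

(* Observed vertices are labelled 0..n-1 (paper: 1..n) through an injective map lab. *)

definition expec :: "'w measure \<Rightarrow> ('w \<Rightarrow> real) \<Rightarrow> real" where
  "expec M f = integral\<^sup>L M f"

definition var :: "'w measure \<Rightarrow> ('w \<Rightarrow> real) \<Rightarrow> real" where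
  "var M f = integral\<^sup>L M (\<lambda>w. (f w - expec M f)^2)"

definition dependency_graph ::
  "'w measure \<Rightarrow> 'v set \<Rightarrow> ('v \<Rightarrow> 'v \<Rightarrow> bool) \<Rightarrow> ('v \<Rightarrow> 'w \<Rightarrow> real) \<Rightarrow> bool" where
  "dependency_graph M V E X \<longleftrightarrow>
     (\<forall>V1 V2. V1 \<subseteq> V \<longrightarrow> V2 \<subseteq> V \<longrightarrow> V1 \<inter> V2 = {} \<longrightarrow>
        (\<forall>u\<in>V1. \<forall>v\<in>V2. \<not> E u v) \<longrightarrow>
        prob_space.indep_var M
          (PiM V1 (\<lambda>_. borel)) (\<lambda>w. restrict (\<lambda>i. X i w) V1)
          (PiM V2 (\<lambda>_. borel)) (\<lambda>w. restrict (\<lambda>i. X i w) V2))"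

definition mu :: "'w measure \<Rightarrow> nat \<Rightarrow> (nat \<Rightarrow> 'w \<Rightarrow> real) \<Rightarrow> real" where
  "mu M n Y = (1 / real n) * (\<Sum>i<n. expec M (Y i))"

definition Xbar :: "nat \<Rightarrow> (nat \<Rightarrow> 'w \<Rightarrow> real) \<Rightarrow> 'w \<Rightarrow> real" where
  "Xbar n Y w = (1 / real n) * (\<Sum>i<n. Y i w)"

definition sigma_hat2 :: "nat \<Rightarrow> (nat \<Rightarrow> 'w \<Rightarrow> real) \<Rightarrow> 'w \<Rightarrow> real" where
  "sigma_hat2 n Y w = (1 / real n) * (\<Sum>i<n. (Y i w - Xbar n Y w)^2)"

definition V2 :: "nat \<Rightarrow> (nat \<Rightarrow> 'w \<Rightarrow> real) \<Rightarrow> (nat \<Rightarrow> nat \<Rightarrow> real) \<Rightarrow> 'w \<Rightarrow> real" where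
  "V2 n Y A w = sigma_hat2 n Y w / real n * (1 + (1 / real n) * (\<Sum>i<n. \<Sum>j<n. A i j))"

definition V2' :: "nat \<Rightarrow> (nat \<Rightarrow> 'w \<Rightarrow> real) \<Rightarrow> (nat \<Rightarrow> nat) \<Rightarrow> 'w \<Rightarrow> real" where
  "V2' n Y d w = sigma_hat2 n Y w / real n *
      (1 + (1 / real n) * (\<Sum>i<n. real (min (d i) (n - 1))))"

definition compatible :: "nat \<Rightarrow> (nat \<Rightarrow> nat \<Rightarrow> bool) \<Rightarrow> (nat \<Rightarrow> nat) \<Rightarrow> (nat \<Rightarrow> nat \<Rightarrow> real) \<Rightarrow> bool" where
  "compatible n ER d A \<longleftrightarrow>
     (\<forall>i<n. \<forall>j<n. (A i j = 0 \<or> A i j = 1) \<and> A i j = A j i) \<and>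
     (\<forall>i<n. A i i = 0) \<and>
     (\<forall>i<n. \<forall>j<n. ER i j \<longrightarrow> A i j = 1) \<and>
     (\<forall>i<n. (\<Sum>j<n. A i j) \<le> real (d i))"

end

theory Submission
  imports Defs
begin

lemma (in prob_space) var_sum_bound:
  fixes W :: "nat \<Rightarrow> 'a \<Rightarrow> real" and G :: "nat \<Rightarrow> nat \<Rightarrow> bool"
  assumes meas: "\<And>i. i<n \<Longrightarrow> W i \<in> borel_measurable M"
    and bnd: "\<And>i. i<n \<Longrightarrow> AE w in M. \<bar>W i w\<bar> \<le> B"
    and ind: "\<And>i j. i<n \<Longrightarrow> j<n \<Longrightarrow> i\<noteq>j \<Longrightarrow> \<not> G i j \<Longrightarrow> indep_var borel (W i) borel (W j)"
    and vs: "\<And>i. i<n \<Longrightarrow> var M (W i) \<le> s"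
    and s0: "0 \<le> s"
  shows "var M (\<lambda>w. \<Sum>i<n. W i w) \<le> (\<Sum>i<n. real (card {j. j<n \<and> (j = i \<or> G i j)})) * s"
proof -
  define e where "e i = expec M (W i)" for i
  define D where "D i w = W i w - e i" for i w
  have intW: "integrable M (W i)" if "i<n" for i
    using integrable_const_bound[of "W i" B] bnd[OF that] meas[OF that] by auto
  have measD: "D i \<in> borel_measurable M" if "i<n" for i
    using meas[OF that] unfolding D_def by measurable
  have intD: "integrable M (D i)" if "i<n" for i
    unfolding D_def using intW[OF that] by auto
  have intDD: "integrable M (\<lambda>w. D i w * D j w)" if "i<n" "j<n" for i j
  proof (rule integrable_const_bound[where B="(B + \<bar>e i\<bar>) * (B + \<bar>e j\<bar>)"])
    show "AE x in M. norm (D i x * D j x) \<le> (B + \<bar>e i\<bar>) * (B + \<bar>e j\<bar>)"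
      using bnd[OF that(1)] bnd[OF that(2)]
    proof eventually_elim
      case (elim x)
      have a: "\<bar>D i x\<bar> \<le> B + \<bar>e i\<bar>" and b: "\<bar>D j x\<bar> \<le> B + \<bar>e j\<bar>"
        using elim unfolding D_def by auto
      show ?case unfolding real_norm_def abs_mult
        by (rule mult_mono[OF a b]) (use a b in linarith)+
    qed
    show "(\<lambda>x. D i x * D j x) \<in> borel_measurable M"
      using measD[OF that(1)] measD[OF that(2)] by measurable
  qed
  have ED0: "integral\<^sup>L M (D i) = 0" if "i<n" for i
    unfolding D_def e_def expec_def using intW[OF that] prob_space by simp
  have c_le: "integral\<^sup>L M (\<lambda>w. D i w * D j w) \<le> (if j = i \<or> G i j then s else 0)"
    if "i<n" "j<n" for i j
  proof (cases "j = i \<or> G i j")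
    case True
    have sq: "integral\<^sup>L M (\<lambda>w. (D k w)^2) = var M (W k)" for k
      unfolding var_def D_def e_def by simp
    have intsq: "integrable M (\<lambda>w. (D k w)^2)" if "k<n" for k
      using intDD[OF that that] by (simp add: power2_eq_square)
    have "integral\<^sup>L M (\<lambda>w. D i w * D j w) \<le> integral\<^sup>L M (\<lambda>w. ((D i w)^2 + (D j w)^2)/2)"
    proof (rule integral_mono)
      show "integrable M (\<lambda>w. ((D i w)^2 + (D j w)^2)/2)"
        using intsq[OF that(1)] intsq[OF that(2)] by auto
      fix w show "D i w * D j w \<le> ((D i w)^2 + (D j w)^2)/2"
        using sum_squares_ge_zero[of "D i w - D j w" 0]
        by (simp add: power2_eq_square algebra_simps)
    qed (use intDD[OF that] in auto)
    also have "\<dots> = (var M (W i) + var M (W j))/2"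
      using intsq[OF that(1)] intsq[OF that(2)] sq by simp
    also have "\<dots> \<le> s" using vs[OF that(1)] vs[OF that(2)] by simp
    finally show ?thesis using True by simp
  next
    case False
    have "indep_var borel ((\<lambda>x. x - e i) \<circ> W i) borel ((\<lambda>x. x - e j) \<circ> W j)"
      by (rule indep_var_compose[OF ind]) (use that False in auto)
    then have "indep_var borel (D i) borel (D j)"
      unfolding D_def comp_def by simp
    then have "integral\<^sup>L M (\<lambda>w. D i w * D j w) = integral\<^sup>L M (D i) * integral\<^sup>L M (D j)"
      using indep_var_lebesgue_integral intD that by blast
    then show ?thesis using ED0 that False by simp
  qed
  have expS: "expec M (\<lambda>w. \<Sum>i<n. W i w) = (\<Sum>i<n. e i)"
    unfolding expec_def e_def using intW by (simp add: integral_sum)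
  have "var M (\<lambda>w. \<Sum>i<n. W i w) = integral\<^sup>L M (\<lambda>w. (\<Sum>i<n. D i w)^2)"
    unfolding var_def expS D_def by (simp add: sum_subtractf)
  also have "\<dots> = integral\<^sup>L M (\<lambda>w. \<Sum>i<n. \<Sum>j<n. D i w * D j w)"
    by (simp add: power2_eq_square sum_product)
  also have "\<dots> = (\<Sum>i<n. \<Sum>j<n. integral\<^sup>L M (\<lambda>w. D i w * D j w))"
  proof -
    have "integral\<^sup>L M (\<lambda>w. \<Sum>i<n. \<Sum>j<n. D i w * D j w) = (\<Sum>i<n. integral\<^sup>L M (\<lambda>w. \<Sum>j<n. D i w * D j w))"
      by (rule Bochner_Integration.integral_sum[where I="{..<n}" and f="\<lambda>i w. \<Sum>j<n. D i w * D j w"]) (use intDD in auto)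
    also have "\<dots> = (\<Sum>i<n. \<Sum>j<n. integral\<^sup>L M (\<lambda>w. D i w * D j w))"
      by (rule sum.cong[OF refl], rule Bochner_Integration.integral_sum[where I="{..<n}"]) (use intDD in auto)
    finally show ?thesis .
  qed
  also have "\<dots> \<le> (\<Sum>i<n. \<Sum>j<n. (if j = i \<or> G i j then s else 0))"
    by (intro sum_mono) (simp add: c_le)
  also have "\<dots> = (\<Sum>i<n. real (card {j. j<n \<and> (j = i \<or> G i j)}) * s)"
  proof (rule sum.cong[OF refl])
    fix i
    have "(\<Sum>j<n. (if j = i \<or> G i j then s else 0)) = (\<Sum>j\<in>{j\<in>{..<n}. j = i \<or> G i j}. s)"
      by (rule sum.inter_filter[symmetric]) simp
    also have "{j\<in>{..<n}. j = i \<or> G i j} = {j. j<n \<and> (j = i \<or> G i j)}" by auto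
    finally show "(\<Sum>j<n. (if j = i \<or> G i j then s else 0)) = real (card {j. j<n \<and> (j = i \<or> G i j)}) * s"
      by simp
  qed
  also have "\<dots> = (\<Sum>i<n. real (card {j. j<n \<and> (j = i \<or> G i j)})) * s"
    by (simp add: sum_distrib_right)
  finally show ?thesis .
qed


lemma var_scale: "var M (\<lambda>w. c * f w) = c^2 * var M f"
proof -
  have "expec M (\<lambda>w. c * f w) = c * expec M f" unfolding expec_def by simp
  then show ?thesis unfolding var_def
    by (simp add: power_mult_distrib right_diff_distrib[symmetric])
qed

lemma var_nonneg: "0 \<le> var M f"
  unfolding var_def by (rule integral_nonneg_AE) auto

lemma card_le_Suc_aux:
  fixes n i :: nat and G :: "nat \<Rightarrow> nat \<Rightarrow> bool"
  shows   "real (card {j. j<n \<and> (j = i \<or> G i j)}) \<le> 1 + real (card {j. j<n \<and> G i j})"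
proof -
  have fin: "finite {j. j<n \<and> G i j}" by (rule finite_subset[of _ "{..<n}"]) auto
  have "{j. j<n \<and> (j = i \<or> G i j)} \<subseteq> insert i {j. j<n \<and> G i j}" by auto
  then have "card {j. j<n \<and> (j = i \<or> G i j)} \<le> card (insert i {j. j<n \<and> G i j})"
    using fin by (intro card_mono) auto
  also have "\<dots> \<le> Suc (card {j. j<n \<and> G i j})"
    using fin by (simp add: card_insert_if)
  finally show ?thesis by simp
qed

lemma (in prob_space) key_var:
  fixes Y :: "nat \<Rightarrow> 'a \<Rightarrow> real" and G :: "nat \<Rightarrow> nat \<Rightarrow> bool"
  assumes n: "0 < n"
    and meas: "\<And>i. i<n \<Longrightarrow> Y i \<in> borel_measurable M"
    and bnd: "\<And>i. i<n \<Longrightarrow> AE w in M. \<bar>Y i w - mu M n Y\<bar> \<le> c1"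
    and ind: "\<And>i j. i<n \<Longrightarrow> j<n \<Longrightarrow> i\<noteq>j \<Longrightarrow> \<not> G i j \<Longrightarrow> indep_var borel (Y i) borel (Y j)"
    and homo: "\<And>i. i<n \<Longrightarrow> var M (Y i) = s2"
  shows "real n * var M (Xbar n Y) \<le> s2 * (1 + (\<Sum>i<n. real (card {j. j<n \<and> G i j})) / real n)"
proof -
  have s2: "0 \<le> s2" using homo[OF n] var_nonneg by metis
  have bnd': "AE w in M. \<bar>Y i w\<bar> \<le> c1 + \<bar>mu M n Y\<bar>" if "i<n" for i
    using bnd[OF that] by eventually_elim auto
  have "var M (\<lambda>w. \<Sum>i<n. Y i w) \<le> (\<Sum>i<n. real (card {j. j<n \<and> (j = i \<or> G i j)})) * s2"
    by (rule var_sum_bound[OF meas bnd' ind]) (use homo s2 in auto)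
  also have "\<dots> \<le> (\<Sum>i<n. 1 + real (card {j. j<n \<and> G i j})) * s2"
    by (intro mult_right_mono sum_mono card_le_Suc_aux s2)
  also have "\<dots> = (real n + (\<Sum>i<n. real (card {j. j<n \<and> G i j}))) * s2"
    by (simp add: sum.distrib)
  finally have A: "var M (\<lambda>w. \<Sum>i<n. Y i w) \<le> (real n + (\<Sum>i<n. real (card {j. j<n \<and> G i j}))) * s2" .
  have "real n * var M (Xbar n Y) = real n * ((1 / real n)^2 * var M (\<lambda>w. \<Sum>i<n. Y i w))"
    using var_scale[of M "1 / real n" "\<lambda>w. \<Sum>i<n. Y i w"] unfolding Xbar_def[abs_def] by simp
  also have "\<dots> = (1 / real n) * var M (\<lambda>w. \<Sum>i<n. Y i w)"
    using n by (simp add: power2_eq_square)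
  also have "\<dots> \<le> (1 / real n) * ((real n + (\<Sum>i<n. real (card {j. j<n \<and> G i j}))) * s2)"
    by (rule mult_left_mono[OF A]) simp
  also have "\<dots> = s2 * (1 + (\<Sum>i<n. real (card {j. j<n \<and> G i j})) / real n)"
    using n by (simp add: field_simps)
  finally show ?thesis .
qed


lemma (in prob_space) key_prob:
  fixes Y :: "nat \<Rightarrow> 'a \<Rightarrow> real" and G :: "nat \<Rightarrow> nat \<Rightarrow> bool"
  assumes n: "0 < n"
    and meas: "\<And>i. i<n \<Longrightarrow> Y i \<in> borel_measurable M"
    and bnd: "\<And>i. i<n \<Longrightarrow> AE w in M. \<bar>Y i w - mu M n Y\<bar> \<le> c1"
    and ind: "\<And>i j. i<n \<Longrightarrow> j<n \<Longrightarrow> i\<noteq>j \<Longrightarrow> \<not> G i j \<Longrightarrow> indep_var borel (Y i) borel (Y j)"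
    and homo: "\<And>i. i<n \<Longrightarrow> var M (Y i) = s2"
    and deg: "\<And>i. i<n \<Longrightarrow> real (card {j. j<n \<and> G i j}) \<le> c2"
    and c1: "0 \<le> c1" and c2: "0 \<le> c2" and dl: "0 < \<delta>"
  shows "measure M {w\<in>space M. s2 - sigma_hat2 n Y w > \<delta>}
     \<le> 2 / \<delta> * var M (Xbar n Y) + 4 / \<delta>^2 * ((1 + c2) * c1^4 / real n)"
proof -
  define \<mu> where "\<mu> = mu M n Y"
  define Z where "Z i w = (Y i w - \<mu>)^2" for i w
  define Q where "Q w = (1 / real n) * (\<Sum>i<n. Z i w)" for w
  have bndm: "\<And>i. i<n \<Longrightarrow> AE w in M. \<bar>Y i w - \<mu>\<bar> \<le> c1" using bnd unfolding \<mu>_def by auto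
  have intY: "integrable M (Y i)" if "i<n" for i
  proof (rule integrable_const_bound[of "Y i" "c1 + \<bar>\<mu>\<bar>"])
    show "AE x in M. norm (Y i x) \<le> c1 + \<bar>\<mu>\<bar>"
      using bndm[OF that] by eventually_elim auto
  qed (rule meas[OF that])
  have measZ: "Z i \<in> borel_measurable M" if "i<n" for i
    using meas[OF that] unfolding Z_def by measurable
  have bndZ: "AE w in M. \<bar>Z i w\<bar> \<le> c1^2" if "i<n" for i
    using bndm[OF that]
  proof eventually_elim
    case (elim w)
    then have "(Y i w - \<mu>)^2 \<le> c1^2"
      by (metis abs_ge_zero power2_abs power_mono)
    then show ?case unfolding Z_def by simp
  qed
  have intZ: "integrable M (Z i)" if "i<n" for i
    using integrable_const_bound[of "Z i" "c1^2"] bndZ[OF that] measZ[OF that] by auto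
  have measS: "(\<lambda>w. \<Sum>i<n. Y i w) \<in> borel_measurable M"
    by (rule borel_measurable_sum) (use meas in auto)
  have measX: "Xbar n Y \<in> borel_measurable M"
    using measS unfolding Xbar_def[abs_def] by measurable
  have measSZ: "(\<lambda>w. \<Sum>i<n. Z i w) \<in> borel_measurable M"
    by (rule borel_measurable_sum) (use measZ in auto)
  have measQ: "Q \<in> borel_measurable M"
    using measSZ unfolding Q_def[abs_def] by measurable
  have measD: "(\<lambda>w. \<Sum>i<n. (Y i w - Xbar n Y w)^2) \<in> borel_measurable M"
    by (rule borel_measurable_sum) (use meas measX in auto)
  have measH: "sigma_hat2 n Y \<in> borel_measurable M"
    using measD unfolding sigma_hat2_def[abs_def] by measurable
  have ident: "sigma_hat2 n Y w = Q w - (Xbar n Y w - \<mu>)^2" for w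
  proof -
    define b where "b = Xbar n Y w - \<mu>"
    have sb: "(\<Sum>i<n. (Y i w - \<mu>)) = real n * b"
      using n unfolding b_def Xbar_def by (simp add: sum_subtractf field_simps)
    have "(\<Sum>i<n. (Y i w - Xbar n Y w)^2) = (\<Sum>i<n. ((Y i w - \<mu>) - b)^2)"
      unfolding b_def by (simp add: algebra_simps)
    also have "\<dots> = (\<Sum>i<n. (Y i w - \<mu>)^2) - 2 * b * (\<Sum>i<n. (Y i w - \<mu>)) + real n * b^2"
      by (simp add: power2_eq_square sum.distrib sum_subtractf sum_distrib_left sum_distrib_right algebra_simps)
    also have "\<dots> = (\<Sum>i<n. Z i w) - real n * b^2"
      unfolding sb Z_def by (simp add: power2_eq_square)
    finally show ?thesis
      using n unfolding sigma_hat2_def Q_def b_def by (simp add: field_simps)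
  qed
  have EX: "expec M (Xbar n Y) = \<mu>"
    unfolding expec_def Xbar_def[abs_def] \<mu>_def mu_def
    using intY by (simp add: Bochner_Integration.integral_sum)
  have EZ: "s2 \<le> expec M (Z i)" if "i<n" for i
  proof -
    define m where "m = expec M (Y i)"
    have "Z i = (\<lambda>w. (Y i w - m)^2 + 2 * (m - \<mu>) * (Y i w - m) + (m - \<mu>)^2)"
      unfolding Z_def by (auto simp: power2_eq_square algebra_simps)
    then have "expec M (Z i) = var M (Y i) + 2 * (m - \<mu>) * 0 + (m - \<mu>)^2"
    proof -
      have i1: "integrable M (\<lambda>w. (Y i w - m)^2)"
      proof -
        have "integrable M (\<lambda>w. (Y i w - \<mu>)^2 - 2 * (m - \<mu>) * (Y i w - m) - (m - \<mu>)^2)"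
          using intZ[OF that] intY[OF that] unfolding Z_def by auto
        also have "(\<lambda>w. (Y i w - \<mu>)^2 - 2 * (m - \<mu>) * (Y i w - m) - (m - \<mu>)^2) = (\<lambda>w. (Y i w - m)^2)"
          by (auto simp: power2_eq_square algebra_simps)
        finally show ?thesis .
      qed
      have i2: "integrable M (\<lambda>w. 2 * (m - \<mu>) * (Y i w - m))" using intY[OF that] by auto
      have z: "integral\<^sup>L M (\<lambda>w. Y i w - m) = 0"
        using intY[OF that] prob_space unfolding m_def expec_def by simp
      assume eq: "Z i = (\<lambda>w. (Y i w - m)^2 + 2 * (m - \<mu>) * (Y i w - m) + (m - \<mu>)^2)"
      show ?thesis unfolding eq expec_def var_def m_def[symmetric]
        using i1 i2 z prob_space by (simp add: m_def expec_def)
    qed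
    then show ?thesis using homo[OF that] by simp
  qed
  have EQ: "s2 \<le> expec M Q"
  proof -
    have "expec M Q = (1 / real n) * (\<Sum>i<n. expec M (Z i))"
      unfolding expec_def Q_def[abs_def] using intZ by (simp add: Bochner_Integration.integral_sum)
    also have "\<dots> \<ge> (1 / real n) * (\<Sum>i<n. s2)"
      by (intro mult_left_mono sum_mono EZ) auto
    finally show ?thesis using n by simp
  qed
  have varZ: "var M (Z i) \<le> c1^4" if "i<n" for i
  proof -
    have ez0: "0 \<le> expec M (Z i)" unfolding expec_def Z_def by (rule integral_nonneg_AE) auto
    have ez1: "expec M (Z i) \<le> c1^2"
    proof -
      have "expec M (Z i) \<le> integral\<^sup>L M (\<lambda>_. c1^2)"
        unfolding expec_def
        by (rule integral_mono_AE) (use intZ[OF that] bndZ[OF that] in auto)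
      then show ?thesis using prob_space by simp
    qed
    have ae: "AE x in M. (Z i x - expec M (Z i))\<^sup>2 \<le> c1 ^ 4"
      using bndZ[OF that]
    proof eventually_elim
      case (elim x)
      have z0: "0 \<le> Z i x" unfolding Z_def by simp
      have "\<bar>Z i x - expec M (Z i)\<bar> \<le> c1^2" using elim z0 ez0 ez1 by auto
      then have "(Z i x - expec M (Z i))^2 \<le> (c1^2)^2"
        by (metis abs_ge_zero power2_abs power_mono)
      then show ?case by (simp add: power_mult[symmetric])
    qed
    have "integrable M (\<lambda>x. (Z i x - expec M (Z i))\<^sup>2)"
    proof (rule integrable_const_bound[where B="c1^4"])
      show "AE x in M. norm ((Z i x - expec M (Z i))\<^sup>2) \<le> c1 ^ 4"
        using ae by eventually_elim simp
    qed (use measZ[OF that] in measurable)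
    then have "var M (Z i) \<le> integral\<^sup>L M (\<lambda>_. c1^4)"
      unfolding var_def by (intro integral_mono_AE ae) auto
    then show ?thesis using prob_space by simp
  qed
  have indZ: "indep_var borel (Z i) borel (Z j)" if "i<n" "j<n" "i\<noteq>j" "\<not> G i j" for i j
  proof -
    have "indep_var borel ((\<lambda>x. (x - \<mu>)^2) \<circ> Y i) borel ((\<lambda>x. (x - \<mu>)^2) \<circ> Y j)"
      by (rule indep_var_compose[OF ind[OF that]]) auto
    then show ?thesis unfolding Z_def[abs_def] comp_def .
  qed
  have "var M (\<lambda>w. \<Sum>i<n. Z i w) \<le> (\<Sum>i<n. real (card {j. j<n \<and> (j = i \<or> G i j)})) * c1^4"
    by (rule var_sum_bound[OF measZ bndZ indZ varZ]) (use c1 in auto)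
  also have "\<dots> \<le> (\<Sum>i<n. 1 + c2) * c1^4"
  proof (intro mult_right_mono sum_mono)
    fix i assume "i \<in> {..<n}"
    then show "real (card {j. j<n \<and> (j = i \<or> G i j)}) \<le> 1 + c2"
      using card_le_Suc_aux[of n i G] deg[of i] by auto
  qed (use c1 in auto)
  finally have vSZ: "var M (\<lambda>w. \<Sum>i<n. Z i w) \<le> real n * (1 + c2) * c1^4" by simp
  have vQ: "var M Q \<le> (1 + c2) * c1^4 / real n"
  proof -
    have "var M Q = (1 / real n)^2 * var M (\<lambda>w. \<Sum>i<n. Z i w)"
      using var_scale[of M "1 / real n" "\<lambda>w. \<Sum>i<n. Z i w"] unfolding Q_def[abs_def] by simp
    also have "\<dots> \<le> (1 / real n)^2 * (real n * (1 + c2) * c1^4)"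
      by (rule mult_left_mono[OF vSZ]) simp
    also have "\<dots> = (1 + c2) * c1^4 / real n"
      using n by (simp add: power2_eq_square field_simps)
    finally show ?thesis .
  qed
  have intQ2: "integrable M (\<lambda>x. Q x ^ 2)"
  proof (rule integrable_const_bound[where B="(c1^2)^2"])
    show "AE x in M. norm (Q x ^ 2) \<le> (c1^2)^2"
    proof -
      have "AE x in M. \<forall>i\<in>{..<n}. \<bar>Z i x\<bar> \<le> c1^2"
        using bndZ by (subst AE_finite_all) auto
      then show ?thesis
      proof eventually_elim
        case (elim x)
        have q0: "0 \<le> Q x" unfolding Q_def Z_def by (auto intro!: sum_nonneg divide_nonneg_nonneg)
        have "(\<Sum>i<n. Z i x) \<le> (\<Sum>i<n. c1^2)" using elim by (intro sum_mono) (meson abs_ge_self lessThan_iff order_trans)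
        then have "Q x \<le> c1^2" using n unfolding Q_def by (simp add: field_simps)
        then have "Q x ^ 2 \<le> (c1^2)^2" using q0 by (intro power_mono) auto
        then show ?case by simp
      qed
    qed
  qed (use measQ in measurable)
  have cheb: "measure M {x\<in>space M. \<bar>Q x - expec M Q\<bar> \<ge> \<delta>/2} \<le> var M Q / (\<delta>/2)^2"
    using Chebyshev_inequality[OF measQ intQ2, of "\<delta>/2"] dl unfolding var_def expec_def by simp
  have intU: "integrable M (\<lambda>x. (Xbar n Y x - \<mu>)^2)"
  proof (rule integrable_const_bound[where B="c1^2"])
    show "AE x in M. norm ((Xbar n Y x - \<mu>)^2) \<le> c1^2"
    proof -
      have "AE x in M. \<forall>i\<in>{..<n}. \<bar>Y i x - \<mu>\<bar> \<le> c1"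
        using bndm by (subst AE_finite_all) auto
      then show ?thesis
      proof eventually_elim
        case (elim x)
        have e: "Xbar n Y x - \<mu> = (1 / real n) * (\<Sum>i<n. (Y i x - \<mu>))"
          using n unfolding Xbar_def by (simp add: sum_subtractf field_simps)
        have "\<bar>\<Sum>i<n. (Y i x - \<mu>)\<bar> \<le> (\<Sum>i<n. \<bar>Y i x - \<mu>\<bar>)" by (rule sum_abs)
        also have "\<dots> \<le> (\<Sum>i<n. c1)" using elim by (intro sum_mono) auto
        finally have "\<bar>Xbar n Y x - \<mu>\<bar> \<le> c1"
          unfolding e using n by (simp add: abs_mult field_simps)
        then have "(Xbar n Y x - \<mu>)^2 \<le> c1^2"
          by (metis abs_ge_zero power2_abs power_mono)
        then show ?case by simp
      qed
    qed
  qed (use measX in measurable)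
  have mark: "measure M {x\<in>space M. (Xbar n Y x - \<mu>)^2 \<ge> \<delta>/2} \<le> var M (Xbar n Y) / (\<delta>/2)"
    using integral_Markov_inequality_measure[OF intU _ _, of "space M" "\<delta>/2"] dl
    unfolding var_def EX by simp
  have sub: "{w\<in>space M. s2 - sigma_hat2 n Y w > \<delta>} \<subseteq>
     {x\<in>space M. \<bar>Q x - expec M Q\<bar> \<ge> \<delta>/2} \<union> {x\<in>space M. (Xbar n Y x - \<mu>)^2 \<ge> \<delta>/2}"
  proof
    fix w assume "w \<in> {w\<in>space M. s2 - sigma_hat2 n Y w > \<delta>}"
    then have w: "w \<in> space M" "s2 - (Q w - (Xbar n Y w - \<mu>)^2) > \<delta>" using ident by auto
    show "w \<in> {x\<in>space M. \<bar>Q x - expec M Q\<bar> \<ge> \<delta>/2} \<union> {x\<in>space M. (Xbar n Y x - \<mu>)^2 \<ge> \<delta>/2}"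
      proof (cases "(Xbar n Y w - \<mu>)^2 \<ge> \<delta>/2")
      case False
      then have "\<delta>/2 \<le> \<bar>Q w - expec M Q\<bar>" using w EQ by linarith
      then show ?thesis using w by auto
    qed (use w in auto)
  qed
  have "measure M {w\<in>space M. s2 - sigma_hat2 n Y w > \<delta>} \<le>
     measure M ({x\<in>space M. \<bar>Q x - expec M Q\<bar> \<ge> \<delta>/2} \<union> {x\<in>space M. (Xbar n Y x - \<mu>)^2 \<ge> \<delta>/2})"
    by (rule finite_measure_mono[OF sub]) (use measQ measX in measurable)
  also have "\<dots> \<le> measure M {x\<in>space M. \<bar>Q x - expec M Q\<bar> \<ge> \<delta>/2} + measure M {x\<in>space M. (Xbar n Y x - \<mu>)^2 \<ge> \<delta>/2}"
    by (rule measure_Un_le) (use measQ measX in measurable)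
  also have "\<dots> \<le> var M Q / (\<delta>/2)^2 + var M (Xbar n Y) / (\<delta>/2)"
    using cheb mark by simp
  also have "\<dots> \<le> ((1 + c2) * c1^4 / real n) / (\<delta>/2)^2 + var M (Xbar n Y) / (\<delta>/2)"
    using divide_right_mono[OF vQ, of "(\<delta>/2)^2"] by simp
  also have "\<dots> = 2 / \<delta> * var M (Xbar n Y) + 4 / \<delta>^2 * ((1 + c2) * c1^4 / real n)"
    using dl by (simp add: field_simps power2_eq_square)
  finally show ?thesis .
qed


lemma ev_aux:
  fixes s h k C e v t :: real
  assumes "1 \<le> k" "k \<le> C" "0 < e" "v \<le> s * k" "h * k \<le> t" "v - t > e"
  shows "s - h > e / C"
proof -
  have a: "(s - h) * k > e" using assms by (simp add: algebra_simps)
  have k0: "0 < k" using assms by simp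
  have "0 < s - h"
  proof (rule ccontr)
    assume "\<not> 0 < s - h"
    then have "(s - h) * k \<le> 0" using k0 by (simp add: mult_nonpos_nonneg)
    then show False using a assms by simp
  qed
  then have "(s - h) * k \<le> (s - h) * C" using assms by (intro mult_left_mono) auto
  then have "e < (s - h) * C" using a by simp
  then show ?thesis using assms by (simp add: divide_less_eq)
qed

lemma dep_indep:
  assumes P: "prob_space M" and D: "dependency_graph M V E X"
    and uv: "u \<in> V" "v \<in> V" "u \<noteq> v" "\<not> E u v"
  shows "prob_space.indep_var M borel (X u) borel (X v)"
proof -
  have I: "prob_space.indep_var M
          (PiM {u} (\<lambda>_. borel)) (\<lambda>w. restrict (\<lambda>i. X i w) {u})
          (PiM {v} (\<lambda>_. borel)) (\<lambda>w. restrict (\<lambda>i. X i w) {v})"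
    using D uv unfolding dependency_graph_def by auto
  have "prob_space.indep_var M borel ((\<lambda>f. f u) \<circ> (\<lambda>w. restrict (\<lambda>i. X i w) {u}))
          borel ((\<lambda>f. f v) \<circ> (\<lambda>w. restrict (\<lambda>i. X i w) {v}))"
    by (rule prob_space.indep_var_compose[OF P I]) auto
  also have "((\<lambda>f. f u) \<circ> (\<lambda>w. restrict (\<lambda>i. X i w) {u})) = X u" by auto
  also have "((\<lambda>f. f v) \<circ> (\<lambda>w. restrict (\<lambda>i. X i w) {v})) = X v" by auto
  finally show ?thesis .
qed

lemma sum_ind_card:
  fixes P :: "nat \<Rightarrow> bool"
  shows "(\<Sum>j<n. (if P j then 1 else 0 :: real)) = real (card {j. j<n \<and> P j})"
proof -
  have "(\<Sum>j<n. (if P j then 1 else 0 :: real)) = (\<Sum>j\<in>{j\<in>{..<n}. P j}. 1)"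
    by (rule sum.inter_filter[symmetric]) simp
  also have "{j\<in>{..<n}. P j} = {j. j<n \<and> P j}" by auto
  finally show ?thesis by simp
qed

theorem corollary2:
  fixes M :: "nat \<Rightarrow> 'w measure"
    and V :: "nat \<Rightarrow> 'v set"
    and E :: "nat \<Rightarrow> 'v \<Rightarrow> 'v \<Rightarrow> bool"
    and X :: "nat \<Rightarrow> 'v \<Rightarrow> 'w \<Rightarrow> real"
    and lab :: "nat \<Rightarrow> nat \<Rightarrow> 'v"
    and ER :: "nat \<Rightarrow> nat \<Rightarrow> nat \<Rightarrow> bool"
    and Am :: "nat \<Rightarrow> 'w \<Rightarrow> nat \<Rightarrow> nat \<Rightarrow> real"
    and c1 c2 c3 \<epsilon> :: real
  defines "Xo \<equiv> (\<lambda>n i. X n (lab n i))"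
    and "d \<equiv> (\<lambda>n i. card {v \<in> V n. E n (lab n i) v})"
  assumes prob: "\<And>n. prob_space (M n)"
    and finV: "\<And>n. finite (V n)"
    and E_in: "\<And>n u v. E n u v \<Longrightarrow> u \<in> V n \<and> v \<in> V n"
    and E_sym: "\<And>n u v. E n u v \<Longrightarrow> E n v u"
    and E_irrefl: "\<And>n u. \<not> E n u u"
    and rv: "\<And>n v. v \<in> V n \<Longrightarrow> X n v \<in> borel_measurable (M n)"
    and dep: "\<And>n. dependency_graph (M n) (V n) (E n) (X n)"
    and lab_inj: "\<And>n. inj_on (lab n) {..<n}"
    and lab_V: "\<And>n i. i < n \<Longrightarrow> lab n i \<in> V n"
    and ER_sub: "\<And>n i j. ER n i j \<Longrightarrow> i < n \<and> j < n \<and> E n (lab n i) (lab n j)"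
    and ER_sym: "\<And>n i j. ER n i j \<Longrightarrow> ER n j i"
    and c_pos: "c1 > 0" "c2 > 0" "c3 > 0"
    and bounded: "\<And>n i. i < n \<Longrightarrow>
        measure (M n) {w \<in> space (M n). \<bar>Xo n i w - mu (M n) n (Xo n)\<bar> > c1} = 0"
    and deg_bound: "\<And>n i. i < n \<Longrightarrow> real (card {j. j < n \<and> E n (lab n i) (lab n j)}) \<le> c2"
    and var_lim: "(\<lambda>n. real n * var (M n) (Xbar n (Xo n))) \<longlonglongrightarrow> c3"
    and homosk: "\<And>n u v. u \<in> V n \<Longrightarrow> v \<in> V n \<Longrightarrow> var (M n) (X n u) = var (M n) (X n v)"
    and Am_compat: "\<And>n w. w \<in> space (M n) \<Longrightarrow> compatible n (ER n) (d n) (Am n w)"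
    and Am_max: "\<And>n w A. w \<in> space (M n) \<Longrightarrow> compatible n (ER n) (d n) A \<Longrightarrow>
        V2 n (Xo n) A w \<le> V2 n (Xo n) (Am n w) w"
    and eps: "\<epsilon> > 0"
  shows "((\<lambda>n. measure (M n) {w \<in> space (M n).
            real n * var (M n) (Xbar n (Xo n)) - real n * V2 n (Xo n) (Am n w) w > \<epsilon>})
           \<longlonglongrightarrow> 0) \<and>
         ((\<lambda>n. measure (M n) {w \<in> space (M n).
            real n * var (M n) (Xbar n (Xo n)) - real n * V2' n (Xo n) (d n) w > \<epsilon>})
           \<longlonglongrightarrow> 0)"
proof -
  define G where "G n i j = E n (lab n i) (lab n j)" for n i j
  define K where "K n = (\<Sum>i<n. real (card {j. j<n \<and> G n i j}))" for n
  define s2 where "s2 n = var (M n) (Xo n 0)" for n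
  define \<delta> where "\<delta> = \<epsilon> / (1 + c2)"
  define A0 where "A0 n i j = (if G n i j then 1 else 0 :: real)" for n i j
  define bd where "bd n = 2 / \<delta> * var (M n) (Xbar n (Xo n)) + 4 / \<delta>^2 * ((1 + c2) * c1^4 / real n)" for n
  have dl: "0 < \<delta>" using eps c_pos unfolding \<delta>_def by simp
  have EV: "{w \<in> space (M n). P w} \<subseteq> {w \<in> space (M n). s2 n - sigma_hat2 n (Xo n) w > \<delta>}
        \<and> measure (M n) {w \<in> space (M n). s2 n - sigma_hat2 n (Xo n) w > \<delta>} \<le> bd n"
    if n: "0 < n" and PP: "\<And>w. w \<in> space (M n) \<Longrightarrow> P w \<Longrightarrow>
          \<exists>t. real n * var (M n) (Xbar n (Xo n)) - t > \<epsilon> \<and> sigma_hat2 n (Xo n) w * (1 + K n / real n) \<le> t"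
    for n P
  proof -
    interpret p: prob_space "M n" by (rule prob)
    have meas: "\<And>i. i<n \<Longrightarrow> Xo n i \<in> borel_measurable (M n)"
      unfolding Xo_def using rv lab_V by auto
    have bnd: "AE w in M n. \<bar>Xo n i w - mu (M n) n (Xo n)\<bar> \<le> c1" if "i<n" for i
    proof -
      have ms: "{w \<in> space (M n). c1 < \<bar>Xo n i w - mu (M n) n (Xo n)\<bar>} \<in> sets (M n)"
        using meas[OF that] by measurable
      then have "AE w in M n. \<not> c1 < \<bar>Xo n i w - mu (M n) n (Xo n)\<bar>"
        using p.prob_Collect_eq_0[OF ms] bounded[OF that] by simp
      then show ?thesis by eventually_elim auto
    qed
    have ind: "prob_space.indep_var (M n) borel (Xo n i) borel (Xo n j)"
      if "i<n" "j<n" "i\<noteq>j" "\<not> G n i j" for i j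
    proof -
      have a: "lab n i \<in> V n" "lab n j \<in> V n" using lab_V that by auto
      have b: "lab n i \<noteq> lab n j" using lab_inj[of n] that unfolding inj_on_def by auto
      have c: "\<not> E n (lab n i) (lab n j)" using that unfolding G_def by auto
      show ?thesis unfolding Xo_def
        using dep_indep[OF prob[of n] dep[of n] a b c] by simp
    qed
    have homo': "var (M n) (Xo n i) = s2 n" if "i<n" for i
      unfolding s2_def Xo_def using homosk lab_V that n by blast
    have deg: "real (card {j. j<n \<and> G n i j}) \<le> c2" if "i<n" for i
      using deg_bound[OF that] unfolding G_def by simp
    have kv: "real n * var (M n) (Xbar n (Xo n)) \<le> s2 n * (1 + K n / real n)"
      unfolding K_def by (rule p.key_var[OF n meas bnd ind homo'])
    have kp: "measure (M n) {w \<in> space (M n). s2 n - sigma_hat2 n (Xo n) w > \<delta>} \<le> bd n"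
      unfolding bd_def by (rule p.key_prob[OF n meas bnd ind homo' deg]) (use c_pos dl in auto)
    have K0: "0 \<le> K n" unfolding K_def by (auto intro: sum_nonneg)
    have Kc: "K n \<le> real n * c2"
    proof -
      have "K n \<le> (\<Sum>i<n. c2)" unfolding K_def by (intro sum_mono deg) auto
      then show ?thesis by simp
    qed
    have k1: "1 \<le> 1 + K n / real n" using K0 n by simp
    have k2: "1 + K n / real n \<le> 1 + c2" using Kc n by (simp add: divide_le_eq mult.commute)
    have "{w \<in> space (M n). P w} \<subseteq> {w \<in> space (M n). s2 n - sigma_hat2 n (Xo n) w > \<delta>}"
    proof safe
      fix w assume w: "w \<in> space (M n)" "P w"
      obtain t where t: "real n * var (M n) (Xbar n (Xo n)) - t > \<epsilon>"
          "sigma_hat2 n (Xo n) w * (1 + K n / real n) \<le> t" using PP[OF w] by blast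
      show "s2 n - sigma_hat2 n (Xo n) w > \<delta>"
        unfolding \<delta>_def by (rule ev_aux[OF k1 k2 eps kv t(2) t(1)])
    qed
    with kp show ?thesis by blast
  qed
  have vlim: "(\<lambda>n. var (M n) (Xbar n (Xo n))) \<longlonglongrightarrow> 0"
  proof -
    have "(\<lambda>n. real n * var (M n) (Xbar n (Xo n)) * (1 / real n)) \<longlonglongrightarrow> c3 * 0"
      by (intro tendsto_mult var_lim lim_1_over_n)
    moreover have "\<forall>\<^sub>F n in sequentially. real n * var (M n) (Xbar n (Xo n)) * (1 / real n) = var (M n) (Xbar n (Xo n))"
      using eventually_gt_at_top[of "0::nat"] by eventually_elim simp
    ultimately show ?thesis using Lim_transform_eventually by fastforce
  qed
  have bdlim: "bd \<longlonglongrightarrow> 0"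
  proof -
    have "(\<lambda>n. 2 / \<delta> * var (M n) (Xbar n (Xo n)) + 4 / \<delta>^2 * ((1 + c2) * c1^4 * (1 / real n))) \<longlonglongrightarrow>
          2 / \<delta> * 0 + 4 / \<delta>^2 * ((1 + c2) * c1^4 * 0)"
      by (intro tendsto_intros vlim lim_1_over_n)
    then show ?thesis unfolding bd_def by simp
  qed
  have conv: "(\<lambda>n. measure (M n) {w \<in> space (M n). P n w}) \<longlonglongrightarrow> 0"
    if H: "\<And>n w. 0 < n \<Longrightarrow> w \<in> space (M n) \<Longrightarrow> P n w \<Longrightarrow>
          \<exists>t. real n * var (M n) (Xbar n (Xo n)) - t > \<epsilon> \<and> sigma_hat2 n (Xo n) w * (1 + K n / real n) \<le> t"
    for P
  proof (rule tendsto_sandwich[OF _ _ tendsto_const bdlim])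
    show "\<forall>\<^sub>F n in sequentially. 0 \<le> measure (M n) {w \<in> space (M n). P n w}" by simp
    show "\<forall>\<^sub>F n in sequentially. measure (M n) {w \<in> space (M n). P n w} \<le> bd n"
      using eventually_gt_at_top[of "0::nat"]
    proof eventually_elim
      case (elim n)
      interpret p: prob_space "M n" by (rule prob)
      have e: "{w \<in> space (M n). P n w} \<subseteq> {w \<in> space (M n). s2 n - sigma_hat2 n (Xo n) w > \<delta>}"
          "measure (M n) {w \<in> space (M n). s2 n - sigma_hat2 n (Xo n) w > \<delta>} \<le> bd n"
        using EV[OF elim, of "P n"] H[OF elim] by blast+
      have "measure (M n) {w \<in> space (M n). P n w} \<le> measure (M n) {w \<in> space (M n). s2 n - sigma_hat2 n (Xo n) w > \<delta>}"
      proof (rule p.finite_measure_mono[OF e(1)])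
        have "\<And>i. i<n \<Longrightarrow> Xo n i \<in> borel_measurable (M n)"
          unfolding Xo_def using rv lab_V by auto
        then have m1: "(\<lambda>w. \<Sum>i<n. Xo n i w) \<in> borel_measurable (M n)"
          by (intro borel_measurable_sum) auto
        then have m2: "Xbar n (Xo n) \<in> borel_measurable (M n)"
          unfolding Xbar_def[abs_def] by measurable
        have "(\<lambda>w. \<Sum>i<n. (Xo n i w - Xbar n (Xo n) w)^2) \<in> borel_measurable (M n)"
          by (rule borel_measurable_sum) (use \<open>\<And>i. i<n \<Longrightarrow> Xo n i \<in> borel_measurable (M n)\<close> m2 in auto)
        then have "sigma_hat2 n (Xo n) \<in> borel_measurable (M n)"
          unfolding sigma_hat2_def[abs_def] by measurable
        then show "{w \<in> space (M n). s2 n - sigma_hat2 n (Xo n) w > \<delta>} \<in> sets (M n)"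
          by measurable
      qed
      with e(2) show ?case by linarith
    qed
  qed
  have sumA0: "(\<Sum>i<n. \<Sum>j<n. A0 n i j) = K n" for n
    unfolding K_def A0_def by (simp add: sum_ind_card)
  have nV2A0: "real n * V2 n (Xo n) (A0 n) w = sigma_hat2 n (Xo n) w * (1 + K n / real n)"
    if "0 < n" for n w
    using that unfolding V2_def sumA0 by (simp add: field_simps)
  have cardG: "card {j. j<n \<and> G n i j} \<le> d n i" if "i<n" for n i
  proof -
    have "card {j. j<n \<and> G n i j} = card (lab n ` {j. j<n \<and> G n i j})"
      by (rule card_image[symmetric], rule inj_on_subset[OF lab_inj]) auto
    also have "\<dots> \<le> d n i" unfolding d_def
      by (rule card_mono) (use finV lab_V ER_sub E_in in \<open>auto simp: G_def\<close>)
    finally show ?thesis .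
  qed
  have cardG2: "card {j. j<n \<and> G n i j} \<le> n - 1" if "i<n" for n i
  proof -
    have "{j. j<n \<and> G n i j} \<subseteq> {..<n} - {i}" using E_irrefl unfolding G_def by auto
    then have "card {j. j<n \<and> G n i j} \<le> card ({..<n} - {i})" by (intro card_mono) auto
    then show ?thesis using that by simp
  qed
  have compat: "compatible n (ER n) (d n) (A0 n)" for n
    unfolding compatible_def
  proof (intro conjI allI impI)
    fix i j assume "i<n" "j<n"
    show "A0 n i j = 0 \<or> A0 n i j = 1" unfolding A0_def by auto
    show "A0 n i j = A0 n j i" unfolding A0_def G_def using E_sym by auto
  next
    fix i show "A0 n i i = 0" unfolding A0_def G_def using E_irrefl by auto
  next
    fix i j assume "i<n" "j<n" "ER n i j" then show "A0 n i j = 1"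
      unfolding A0_def G_def using ER_sub by auto
  next
    fix i assume i: "i<n"
    have "(\<Sum>j<n. A0 n i j) = real (card {j. j<n \<and> G n i j})"
      unfolding A0_def by (rule sum_ind_card)
    then show "(\<Sum>j<n. A0 n i j) \<le> real (d n i)" using cardG[OF i] by simp
  qed
  have s0: "0 \<le> sigma_hat2 n (Xo n) w" for n w
    unfolding sigma_hat2_def by (auto intro!: sum_nonneg divide_nonneg_nonneg)
  show ?thesis
  proof
    show "(\<lambda>n. measure (M n) {w \<in> space (M n).
            real n * var (M n) (Xbar n (Xo n)) - real n * V2 n (Xo n) (Am n w) w > \<epsilon>}) \<longlonglongrightarrow> 0"
    proof (rule conv)
      fix n w assume n: "0 < n" and w: "w \<in> space (M n)"
        and P: "real n * var (M n) (Xbar n (Xo n)) - real n * V2 n (Xo n) (Am n w) w > \<epsilon>"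
      have "sigma_hat2 n (Xo n) w * (1 + K n / real n) \<le> real n * V2 n (Xo n) (Am n w) w"
        unfolding nV2A0[OF n, symmetric] using Am_max[OF w compat] by (intro mult_left_mono) auto
      with P show "\<exists>t. real n * var (M n) (Xbar n (Xo n)) - t > \<epsilon> \<and> sigma_hat2 n (Xo n) w * (1 + K n / real n) \<le> t"
        by blast
    qed
    show "(\<lambda>n. measure (M n) {w \<in> space (M n).
            real n * var (M n) (Xbar n (Xo n)) - real n * V2' n (Xo n) (d n) w > \<epsilon>}) \<longlonglongrightarrow> 0"
    proof (rule conv)
      fix n w assume n: "0 < n" and w: "w \<in> space (M n)"
        and P: "real n * var (M n) (Xbar n (Xo n)) - real n * V2' n (Xo n) (d n) w > \<epsilon>"
      have "K n \<le> (\<Sum>i<n. real (min (d n i) (n - 1)))"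
        unfolding K_def by (intro sum_mono) (use cardG cardG2 in auto)
      then have "1 + K n / real n \<le> 1 + (1 / real n) * (\<Sum>i<n. real (min (d n i) (n - 1)))"
        using n by (simp add: divide_right_mono)
      then have "sigma_hat2 n (Xo n) w * (1 + K n / real n) \<le>
          sigma_hat2 n (Xo n) w * (1 + (1 / real n) * (\<Sum>i<n. real (min (d n i) (n - 1))))"
        by (intro mult_left_mono s0)
      also have "\<dots> = real n * V2' n (Xo n) (d n) w"
        unfolding V2'_def using n by simp
      finally show "\<exists>t. real n * var (M n) (Xbar n (Xo n)) - t > \<epsilon> \<and> sigma_hat2 n (Xo n) w * (1 + K n / real n) \<le> t"
        using P by blast
    qed
  qed
qed

end
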